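(* For all $n\ge1$ and $j\in\{1,2,3\}$, $$\|\varphi^{(j)}_n\|^2=\frac{\mu_+^{n+1}-\mu_-^{n+1}}{\mu_+-\mu_-},$$ where $\mu_\pm=(1\pm\sqrt{1+4|\lambda|^2})/2$. Consequently, with $\mu=\mu_-/\mu_+\in(-1,0]$ and $\alpha_n=\|\varphi_{n-1}\|^2/\|\varphi_n\|^2$ (convention $\varphi_0=1$), $$\alpha_n=\frac1{\mu_+}\,\frac{1-\mu^n}{1-\mu^{n+1}}.$$
   Context: $\lambda\in\mathbb C$. For $L\in\mathbb N$, $\varphi_L\in\bigotimes_{x=1}^{3L}\mathbb C^2$ is $\varphi_L=\sum_{\mathbf D}\lambda^{\#(\mathbf D)}|\boldsymbol\sigma(\mathbf D)\rangle$, summing over all tilings $\mathbf D$ of $[1,3L]$ obtained from $L$ consecutive monomers (length 3, content $100$) by replacing some disjoint pairs of consecutive monomers by a dimer (length 6, content $011000$); $\#(\mathbf D)$ is the number of dimers, $\boldsymbol\sigma(\mathbf D)$ the concatenated 0/1 content, and $|\boldsymbol\sigma\rangle$ the orthonormal product basis. For $j\in\{1,2\}$, $\varphi^{(j)}_L$ on $[1,3(L-1)+j]$ is defined likewise from $L-1$ monomers followed by a right $j$-monomer (content $1$, resp. $10$), where the last monomer and the right $j$-monomer may also be replaced by a truncated $j$-dimer (content $0110$, resp. $01100$), counted in $\#(\mathbf D)$. $\varphi^{(3)}_L=\varphi_L$. *)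

theory Defs
  imports Complex_Main
begin

text \<open>Tiles: monomer (content 100), dimer (content 011000),
  right j-monomer (content 1, resp. 10) and truncated j-dimer (content 0110, resp. 01100).
  Spin content is encoded as a bool list (True = 1, False = 0).\<close>

datatype tile = Mono | Dimer | RMono nat | TDimer nat

fun tile_content :: "tile \<Rightarrow> bool list" where
  "tile_content Mono = [True, False, False]"
| "tile_content Dimer = [False, True, True, False, False, False]"
| "tile_content (RMono j) = (if j = 1 then [True] else [True, False])"
| "tile_content (TDimer j) = (if j = 1 then [False, True, True, False]
                              else [False, True, True, False, False])"

fun tile_weight :: "tile \<Rightarrow> nat" where
  "tile_weight Mono = 1"
| "tile_weight Dimer = 2"
| "tile_weight (RMono j) = 0"
| "tile_weight (TDimer j) = 0"

fun is_dimer :: "tile \<Rightarrow> bool" where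
  "is_dimer Dimer = True"
| "is_dimer (TDimer j) = True"
| "is_dimer _ = False"

text \<open>Tilings of [1,3L] obtained from L monomers by replacing some disjoint
  pairs of consecutive monomers by dimers.\<close>
definition tilings :: "nat \<Rightarrow> tile list set" where
  "tilings L = {ts. set ts \<subseteq> {Mono, Dimer} \<and> sum_list (map tile_weight ts) = L}"

definition jtilings :: "nat \<Rightarrow> nat \<Rightarrow> tile list set" where
  "jtilings j L = (if j = 3 then tilings L else
     {ts @ [RMono j] | ts. ts \<in> tilings (L - 1)}
     \<union> {ts @ [TDimer j] | ts. L \<ge> 2 \<and> ts \<in> tilings (L - 2)})"

definition content :: "tile list \<Rightarrow> bool list" where
  "content ts = concat (map tile_content ts)"

definition num_dimers :: "tile list \<Rightarrow> nat" where
  "num_dimers ts = length (filter is_dimer ts)"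

text \<open>Coefficient of the basis vector |sigma> in the vector
  sum over tilings D of lam^#D |sigma(D)> built from a set of tilings.\<close>
definition coeff :: "complex \<Rightarrow> tile list set \<Rightarrow> bool list \<Rightarrow> complex" where
  "coeff lam T \<sigma> = (\<Sum>ts\<in>{ts\<in>T. content ts = \<sigma>}. lam ^ num_dimers ts)"

text \<open>Squared norm w.r.t. the orthonormal product basis.\<close>
definition norm_sq :: "complex \<Rightarrow> tile list set \<Rightarrow> real" where
  "norm_sq lam T = (\<Sum>\<sigma>\<in>content ` T. (cmod (coeff lam T \<sigma>))\<^sup>2)"

definition phi_norm_sq :: "complex \<Rightarrow> nat \<Rightarrow> nat \<Rightarrow> real" where
  "phi_norm_sq lam j L = norm_sq lam (jtilings j L)"

definition mu_plus :: "complex \<Rightarrow> real" where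
  "mu_plus lam = (1 + sqrt (1 + 4 * (cmod lam)\<^sup>2)) / 2"

definition mu_minus :: "complex \<Rightarrow> real" where
  "mu_minus lam = (1 - sqrt (1 + 4 * (cmod lam)\<^sup>2)) / 2"

end

theory Submission
  imports Defs
begin

lemma content_simps[simp]: "content [] = []" "content (t#ts) = tile_content t @ content ts"
  "content (xs @ ys) = content xs @ content ys"
  by (auto simp: content_def)

lemma inj_plain: "set xs \<subseteq> {Mono,Dimer} \<Longrightarrow> set ys \<subseteq> {Mono,Dimer} \<Longrightarrow> content xs = content ys \<Longrightarrow> xs = ys"
proof (induction xs arbitrary: ys)
  case Nil then show ?case by (cases ys) auto
next
  case (Cons x xs)
  then show ?case by (cases ys) auto
qed

lemma inj_end: "set xs \<subseteq> {Mono,Dimer} \<Longrightarrow> set ys \<subseteq> {Mono,Dimer} \<Longrightarrow> e1 \<in> {RMono j, TDimer j}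
  \<Longrightarrow> e2 \<in> {RMono j, TDimer j} \<Longrightarrow> content xs @ tile_content e1 = content ys @ tile_content e2 \<Longrightarrow> xs = ys \<and> e1 = e2"
proof (induction xs arbitrary: ys)
  case Nil then show ?case
  proof (cases ys)
    case Nil with Nil.prems show ?thesis by (auto split: if_splits)
  next
    case (Cons y ys')
    have "length (content ys @ tile_content e2) \<ge> 4"
      using Cons Nil.prems by (auto split: if_splits)
    moreover have "hd (content ys @ tile_content e2) = (y = Mono)"
      using Cons Nil.prems by auto
    moreover have "y = Dimer \<Longrightarrow> length (content ys @ tile_content e2) \<ge> 7"
      using Cons Nil.prems by (auto split: if_splits)
    ultimately show ?thesis using Nil.prems Cons by (cases "j = Suc 0") auto
  qed
next
  case (Cons x xs)
  show ?case
  proof (cases ys)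
    case Nil
    hence ysn: "ys = []" .
    have "length (content (x#xs) @ tile_content e1) \<ge> 4"
      using Cons.prems(1,3) by (auto split: if_splits)
    moreover have "hd (content (x#xs) @ tile_content e1) = (x = Mono)"
      using Cons.prems(1) by auto
    moreover have "x = Dimer \<Longrightarrow> length (content (x#xs) @ tile_content e1) \<ge> 7"
      using Cons.prems(1,3) by (auto split: if_splits)
    ultimately show ?thesis using Cons.prems ysn by (cases "j = Suc 0") auto
  next
    case (Cons y ys')
    have "x = y" using Cons Cons.prems by auto
    then show ?thesis using Cons Cons.prems Cons.IH[of ys'] by auto
  qed
qed


lemma tw_pos: "set ts \<subseteq> {Mono,Dimer} \<Longrightarrow> length ts \<le> sum_list (map tile_weight ts)"
  by (induction ts) auto

lemma tw0: "set ts \<subseteq> {Mono,Dimer} \<Longrightarrow> (\<forall>n\<in>set ts. tile_weight n = 0) \<Longrightarrow> ts = []"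
  by (cases ts) auto

lemma finite_tilings: "finite (tilings L)"
proof -
  have "tilings L \<subseteq> {ts. set ts \<subseteq> {Mono,Dimer} \<and> length ts \<le> L}"
    using tw_pos unfolding tilings_def by fastforce
  moreover have "finite {ts. set ts \<subseteq> {Mono,Dimer} \<and> length ts \<le> L}"
    by (rule finite_lists_length_le) simp
  ultimately show ?thesis by (rule finite_subset)
qed

lemma tilings_0: "tilings 0 = {[]}"
proof -
  have "ts \<in> tilings 0 \<Longrightarrow> ts = []" for ts
    using tw0[of ts] unfolding tilings_def by auto
  then show ?thesis unfolding tilings_def by auto
qed

lemma tilings_1: "tilings (Suc 0) = {[Mono]}"
proof -
  have "ts \<in> tilings (Suc 0) \<Longrightarrow> ts = [Mono]" for ts
    unfolding tilings_def
  proof (cases ts)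
    case (Cons t ts')
    assume a: "ts \<in> {ts. set ts \<subseteq> {Mono, Dimer} \<and> sum_list (map tile_weight ts) = Suc 0}"
    then have "ts' = []" using tw0[of ts'] Cons by auto
    then show ?thesis using a Cons by auto
  qed auto
  then show ?thesis unfolding tilings_def by auto
qed

lemma tilings_SS: "tilings (Suc (Suc L)) = (\<lambda>ts. Mono # ts) ` tilings (Suc L) \<union> (\<lambda>ts. Dimer # ts) ` tilings L"
proof (intro equalityI subsetI)
  fix ts assume a: "ts \<in> tilings (Suc (Suc L))"
  then show "ts \<in> (\<lambda>ts. Mono # ts) ` tilings (Suc L) \<union> (\<lambda>ts. Dimer # ts) ` tilings L"
    unfolding tilings_def by (cases ts) auto
qed (auto simp: tilings_def)

definition W :: "real \<Rightarrow> nat \<Rightarrow> real" where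
  "W x L = (\<Sum>t\<in>tilings L. x ^ num_dimers t)"

lemma nd_simps[simp]: "num_dimers (Mono # ts) = num_dimers ts" "num_dimers (Dimer # ts) = Suc (num_dimers ts)"
  "num_dimers (ts @ [RMono j]) = num_dimers ts" "num_dimers (ts @ [TDimer j]) = Suc (num_dimers ts)"
  by (auto simp: num_dimers_def)

lemma W_0: "W x 0 = 1" by (simp add: W_def tilings_0 num_dimers_def)
lemma W_1: "W x (Suc 0) = 1" by (simp add: W_def tilings_1 num_dimers_def)
lemma W_SS: "W x (Suc (Suc L)) = W x (Suc L) + x * W x L"
proof -
  have d: "(\<lambda>ts. Mono # ts) ` tilings (Suc L) \<inter> (\<lambda>ts. Dimer # ts) ` tilings L = {}" by auto
  have "W x (Suc (Suc L)) = (\<Sum>t\<in>(\<lambda>ts. Mono # ts) ` tilings (Suc L). x ^ num_dimers t)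
     + (\<Sum>t\<in>(\<lambda>ts. Dimer # ts) ` tilings L. x ^ num_dimers t)"
    unfolding W_def tilings_SS by (rule sum.union_disjoint) (auto simp: finite_tilings)
  also have "\<dots> = W x (Suc L) + x * W x L"
    by (subst sum.reindex, simp, subst sum.reindex, simp)
       (simp add: W_def sum_distrib_left)
  finally show ?thesis .
qed

lemma norm_sq_inj: "finite T \<Longrightarrow> inj_on content T \<Longrightarrow> norm_sq lam T = (\<Sum>t\<in>T. ((cmod lam)^2) ^ num_dimers t)"
proof -
  assume f: "finite T" and i: "inj_on content T"
  have c: "coeff lam T (content t) = lam ^ num_dimers t" if "t \<in> T" for t
  proof -
    have "{ts\<in>T. content ts = content t} = {t}" using i that by (auto dest: inj_onD)
    then show ?thesis unfolding coeff_def by simp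
  qed
  have "norm_sq lam T = (\<Sum>t\<in>T. (cmod (coeff lam T (content t)))\<^sup>2)"
    unfolding norm_sq_def by (rule sum.reindex[OF i, unfolded comp_def])
  also have "\<dots> = (\<Sum>t\<in>T. ((cmod lam)^2) ^ num_dimers t)"
    by (rule sum.cong) (auto simp: c norm_power power_mult[symmetric] mult.commute)
  finally show ?thesis by simp
qed


lemma inj_tilings: "inj_on content (tilings L)"
  by (rule inj_onI) (auto simp: tilings_def intro: inj_plain)

lemma jtil_eq: "j \<in> {1,2} \<Longrightarrow> jtilings j L = (\<lambda>ts. ts @ [RMono j]) ` tilings (L - 1)
   \<union> (\<lambda>ts. ts @ [TDimer j]) ` (if 2 \<le> L then tilings (L - 2) else {})"
  unfolding jtilings_def by auto

lemma phi_W: assumes j: "j \<in> {1,2::nat}" and L: "L \<ge> 1"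
  shows "phi_norm_sq lam j L = W ((cmod lam)^2) L"
proof -
  define x where "x = (cmod lam)^2"
  let ?A = "(\<lambda>ts. ts @ [RMono j]) ` tilings (L - 1)"
  let ?B = "(\<lambda>ts. ts @ [TDimer j]) ` (if 2 \<le> L then tilings (L - 2) else {})"
  have fin: "finite (jtilings j L)" unfolding jtil_eq[OF j] by (auto simp: finite_tilings)
  have inj: "inj_on content (jtilings j L)"
    unfolding jtil_eq[OF j]
  proof (rule inj_onI)
    fix a b assume a: "a \<in> ?A \<union> ?B" and b: "b \<in> ?A \<union> ?B" and e: "content a = content b"
    obtain xs e1 where "a = xs @ [e1]" "set xs \<subseteq> {Mono,Dimer}" "e1 \<in> {RMono j, TDimer j}"
      using a by (auto simp: tilings_def split: if_splits)
    moreover obtain ys e2 where "b = ys @ [e2]" "set ys \<subseteq> {Mono,Dimer}" "e2 \<in> {RMono j, TDimer j}"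
      using b by (auto simp: tilings_def split: if_splits)
    ultimately show "a = b" using e inj_end[of xs ys e1 j e2] by auto
  qed
  have "phi_norm_sq lam j L = (\<Sum>t\<in>?A \<union> ?B. x ^ num_dimers t)"
    using norm_sq_inj[OF fin inj, of lam] unfolding phi_norm_sq_def x_def jtil_eq[OF j] by simp
  also have "\<dots> = (\<Sum>t\<in>?A. x ^ num_dimers t) + (\<Sum>t\<in>?B. x ^ num_dimers t)"
    by (rule sum.union_disjoint) (auto simp: finite_tilings)
  also have "(\<Sum>t\<in>?A. x ^ num_dimers t) = W x (L - 1)"
    by (subst sum.reindex) (auto simp: W_def inj_on_def)
  also have "(\<Sum>t\<in>?B. x ^ num_dimers t) = (if 2 \<le> L then x * W x (L - 2) else 0)"
    by (subst sum.reindex) (auto simp: W_def inj_on_def sum_distrib_left)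
  also have "W x (L - 1) + (if 2 \<le> L then x * W x (L - 2) else 0) = W x L"
  proof (cases "L \<ge> 2")
    case True
    then obtain k where "L = Suc (Suc k)" by (metis add_2_eq_Suc le_Suc_ex)
    then show ?thesis by (simp add: W_SS)
  next
    case False
    then have "L = Suc 0" using L by auto
    then show ?thesis by (simp add: W_0 W_1)
  qed
  finally show ?thesis by (simp add: x_def)
qed

lemma W_closed:
  fixes x :: real
  assumes x: "x \<ge> 0"
  defines "p \<equiv> (1 + sqrt (1 + 4 * x)) / 2" and "m \<equiv> (1 - sqrt (1 + 4 * x)) / 2"
  shows "W x n = (p ^ (n + 1) - m ^ (n + 1)) / (p - m)"
proof -
  have s: "sqrt (1 + 4*x) ^ 2 = 1 + 4 * x" using x by simp
  have pm: "p - m = sqrt (1 + 4*x)" unfolding p_def m_def by (simp add: field_simps)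
  have pos: "p - m > 0" unfolding pm using x by simp
  have p2: "p^2 = p + x" unfolding p_def using s by (simp add: power2_eq_square field_simps)
  have m2: "m^2 = m + x" unfolding m_def using s by (simp add: power2_eq_square field_simps)
  show ?thesis
  proof (induction n rule: nat_less_induct)
    case (1 n)
    show ?case
    proof (cases n)
      case 0 then show ?thesis using pos by (simp add: W_0)
    next
      case (Suc k) note k = Suc
      show ?thesis
      proof (cases k)
        case 0 
        have "p + m = 1" unfolding p_def m_def by (simp add: field_simps)
        moreover have "p^2 - m^2 = (p+m)*(p-m)" by (simp add: power2_eq_square algebra_simps)
        ultimately have "p^2 - m^2 = p - m" by simp
        then show ?thesis using 0 k pos by (simp add: W_1 power2_eq_square)
      next
        case (Suc i)
        have IH1: "W x (Suc i) = (p ^ (i + 2) - m ^ (i + 2)) / (p - m)" using 1 k Suc by auto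
        have IH0: "W x i = (p ^ (i + 1) - m ^ (i + 1)) / (p - m)" using 1 k Suc by auto
        have pp: "p ^ (i+3) = p^(i+2) + x * p^(i+1)"
        proof -
          have "p ^ (i+3) = p^(i+1) * p^2" by (simp add: numeral_3_eq_3 power2_eq_square)
          also have "\<dots> = p^(i+1) * p + x * p^(i+1)" by (simp only: p2) (simp add: algebra_simps)
          also have "p^(i+1) * p = p^(i+2)" by simp
          finally show ?thesis .
        qed
        have mm: "m ^ (i+3) = m^(i+2) + x * m^(i+1)"
        proof -
          have "m ^ (i+3) = m^(i+1) * m^2" by (simp add: numeral_3_eq_3 power2_eq_square)
          also have "\<dots> = m^(i+1) * m + x * m^(i+1)" by (simp only: m2) (simp add: algebra_simps)
          also have "m^(i+1) * m = m^(i+2)" by simp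
          finally show ?thesis .
        qed
        have "W x n = W x (Suc i) + x * W x i" using k Suc by (simp add: W_SS)
        also have "\<dots> = ((p^(i+2) + x * p^(i+1)) - (m^(i+2) + x * m^(i+1))) / (p - m)"
          unfolding IH1 IH0 by (simp add: diff_divide_distrib add_divide_distrib right_diff_distrib)
        also have "\<dots> = (p ^ (i+3) - m ^ (i+3)) / (p - m)"
          unfolding pp mm ..
        finally show ?thesis using k Suc by (simp add: numeral_3_eq_3)
      qed
    qed
  qed
qed


lemma norm_tilings: "norm_sq lam (tilings n) = W ((cmod lam)^2) n"
  using norm_sq_inj[OF finite_tilings inj_tilings] by (simp add: W_def)

theorem lemma2p13:
  fixes lam :: complex
  shows "(\<forall>n j. n \<ge> 1 \<longrightarrow> j \<in> {1, 2, 3} \<longrightarrow>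
            phi_norm_sq lam j n
              = (mu_plus lam ^ (n + 1) - mu_minus lam ^ (n + 1)) / (mu_plus lam - mu_minus lam))
      \<and> (let \<mu> = mu_minus lam / mu_plus lam in
           -1 < \<mu> \<and> \<mu> \<le> 0 \<and>
           (\<forall>n. n \<ge> 1 \<longrightarrow>
              norm_sq lam (tilings (n - 1)) / norm_sq lam (tilings n)
                = (1 / mu_plus lam) * ((1 - \<mu> ^ n) / (1 - \<mu> ^ (n + 1)))))"
proof -
  define x where "x = (cmod lam)^2"
  define p where "p = mu_plus lam"
  define m where "m = mu_minus lam"
  have x0: "x \<ge> 0" unfolding x_def by simp
  have pdef: "p = (1 + sqrt (1 + 4 * x)) / 2" unfolding p_def mu_plus_def x_def ..
  have mdef: "m = (1 - sqrt (1 + 4 * x)) / 2" unfolding m_def mu_minus_def x_def ..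
  have Wc: "W x n = (p ^ (n + 1) - m ^ (n + 1)) / (p - m)" for n
    unfolding pdef mdef by (rule W_closed[OF x0])
  have s1: "sqrt (1 + 4 * x) \<ge> 1" using x0 by simp
  have s2: "1 + sqrt (1 + 4 * x) > 0" using s1 by linarith
  have ppos: "p > 0" unfolding pdef using s2 by simp
  have mneg: "m \<le> 0" unfolding mdef using s1 by simp
  have pm1: "p + m = 1" unfolding pdef mdef by (simp add: field_simps)
  have absm: "\<bar>m\<bar> < p" using mneg pm1 by simp
  have B: "m ^ k < p ^ k" if "k \<ge> 1" for k
  proof -
    have "m ^ k \<le> \<bar>m\<bar> ^ k" by (metis abs_ge_self power_abs)
    also have "\<dots> < p ^ k" using that absm by (intro power_strict_mono) auto
    finally show ?thesis .
  qed
  have part1: "\<forall>n j. n \<ge> 1 \<longrightarrow> j \<in> {1, 2, 3} \<longrightarrow>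
            phi_norm_sq lam j n = (p ^ (n + 1) - m ^ (n + 1)) / (p - m)"
  proof (intro allI impI)
    fix n j :: nat assume n: "n \<ge> 1" and j: "j \<in> {1,2,3}"
    show "phi_norm_sq lam j n = (p ^ (n + 1) - m ^ (n + 1)) / (p - m)"
    proof (cases "j = 3")
      case True
      then show ?thesis using norm_tilings[of lam n]
        by (simp add: phi_norm_sq_def jtilings_def Wc x_def[symmetric])
    next
      case False
      then have "j \<in> {1,2}" using j by auto
      then show ?thesis using phi_W[OF _ n, of j lam] Wc by (simp add: x_def[symmetric])
    qed
  qed
  define \<mu> where "\<mu> = m / p"
  have mu1: "-1 < \<mu>" unfolding \<mu>_def using absm ppos by (simp add: field_simps)
  have mu2: "\<mu> \<le> 0" unfolding \<mu>_def using mneg ppos by (simp add: divide_nonpos_pos)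
  have part3: "norm_sq lam (tilings (n - 1)) / norm_sq lam (tilings n)
                = (1 / p) * ((1 - \<mu> ^ n) / (1 - \<mu> ^ (n + 1)))" if n: "n \<ge> 1" for n
  proof -
    have e1: "n - 1 + 1 = n" using n by simp
    have pmn: "p - m > 0" using absm by simp
    have Bn: "p ^ (n+1) - m ^ (n+1) > 0" using B[of "n+1"] by simp
    have q1: "1 - \<mu> ^ n = (p^n - m^n) / p^n" unfolding \<mu>_def power_divide using ppos
      by (simp add: field_simps)
    have q2: "1 - \<mu> ^ (n+1) = (p^(n+1) - m^(n+1)) / p^(n+1)" unfolding \<mu>_def power_divide using ppos
      by (simp add: field_simps)
    have "norm_sq lam (tilings (n - 1)) / norm_sq lam (tilings n)
        = ((p ^ n - m ^ n) / (p - m)) / ((p ^ (n + 1) - m ^ (n + 1)) / (p - m))"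
      unfolding norm_tilings x_def[symmetric] Wc e1 ..
    also have "\<dots> = (p ^ n - m ^ n) / (p ^ (n + 1) - m ^ (n + 1))" using pmn by simp
    also have "\<dots> = (1 / p) * ((1 - \<mu> ^ n) / (1 - \<mu> ^ (n + 1)))"
      unfolding q1 q2 using ppos Bn by (simp add: field_simps)
    finally show ?thesis .
  qed
  show ?thesis
    using part1 mu1 mu2 part3 unfolding p_def m_def \<mu>_def Let_def by blast
qed

end
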